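(* Let $L\in R[x][\partial]$ have order $r>0$ and let $k\in\mathbb{N}$ with $k\ge r$. Let $T$ be a desingularized operator for $L$ with $\deg_\partial(T)=k$. Then: (i) $\deg_x(\mathrm{lc}_\partial(T))=\min\{\deg_x(\mathrm{lc}_\partial(Q)): Q\in M_k(L)\setminus\{0\}\}$; (ii) $\partial^iT$ is a desingularized operator for $L$ for each $i\in\mathbb{N}$; (iii) writing $\mathrm{lc}_\partial(T)=ag$ with $a\in R$ and $g\in R[x]$ primitive, for every $F\in\mathrm{cont}(L)$ of order $j\ge k$, $\sigma^{j-k}(g)$ divides $\mathrm{lc}_\partial(F)$ in $R[x]$.
   Context: $R$ is a principal ideal domain with quotient field $Q_R$; $\sigma$ is an $R$-automorphism of $R[x]$ with $\sigma(x)=\gamma x+\tau$ ($\gamma$ a unit), $\delta$ an $R$-linear $\sigma$-derivation with $\deg\delta(x)\le1$; $R[x][\partial]$ is the Ore algebra with $\partial p=\sigma(p)\partial+\delta(p)$, inside $Q_R(x)[\partial]$. $\deg_\partial$, $\mathrm{lc}_\partial$: order and leading coefficient in $\partial$. Primitive polynomial: gcd of coefficients is $1$. $\mathrm{cont}(L)=Q_R(x)[\partial]L\cap R[x][\partial]$; $M_k(L)=\{P\in\mathrm{cont}(L):\deg_\partial P\le k\}$. For $p\in R[x]$ dividing $\mathrm{lc}_\partial(L)$: $p$ is removable from $L$ at order $k$ if there are $P\in Q_R(x)[\partial]$ of order $k$ and $w,v\in R[x]$ with $\gcd(p,w)=1$ such that $PL\in R[x][\partial]$ and $\sigma^{-k}(\mathrm{lc}_\partial(PL))=\frac{w}{vp}\mathrm{lc}_\partial(L)$;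 non-removable if not removable at any order. If $\mathrm{lc}_\partial(L)=c\,p_1^{e_1}\cdots p_m^{e_m}$ ($c\in R$, $p_i\in R[x]\setminus R$ irreducible, pairwise coprime), $T\in R[x][\partial]$ of order $k$ is desingularized for $L$ if $T\in\mathrm{cont}(L)$ and $\sigma^{r-k}(\mathrm{lc}_\partial(T))=\frac{a}{b\,p_1^{k_1}\cdots p_m^{k_m}}\mathrm{lc}_\partial(L)$ with $a,b\in R$, $b\neq0$, and $p_i^{d_i}$ non-removable from $L$ for all integers $d_i>k_i$. *)

theory Defs
  imports "HOL-Computational_Algebra.Polynomial_Factorial"
begin

definition pid :: "'a::comm_ring_1 itself \<Rightarrow> bool" where
  "pid _ \<longleftrightarrow> (\<forall>I::'a set. (0 \<in> I \<and> (\<forall>x\<in>I. \<forall>y\<in>I. x + y \<in> I) \<and> (\<forall>x\<in>I. \<forall>c. c * x \<in> I))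
      \<longrightarrow> (\<exists>g. I = {c * g | c. True}))"

text \<open>Generic Ore polynomials over a commutative coefficient ring K, stored as
  K poly in the variable \<partial> with coefficients on the left:
  P = sum_i (coeff P i) \<partial>^i.  Multiplication: \<partial> b = s(b) \<partial> + d(b).\<close>
definition ore_d :: "('k::comm_ring_1 \<Rightarrow> 'k) \<Rightarrow> ('k \<Rightarrow> 'k) \<Rightarrow> 'k poly \<Rightarrow> 'k poly" where
  "ore_d s d Q = pCons 0 (map_poly s Q) + map_poly d Q"

definition ore_mult :: "('k::comm_ring_1 \<Rightarrow> 'k) \<Rightarrow> ('k \<Rightarrow> 'k) \<Rightarrow> 'k poly \<Rightarrow> 'k poly \<Rightarrow> 'k poly" where
  "ore_mult s d P Q = (\<Sum>i\<le>degree P. smult (coeff P i) ((ore_d s d ^^ i) Q))"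

definition ore_sigma :: "'a::comm_ring_1 \<Rightarrow> 'a \<Rightarrow> 'a poly \<Rightarrow> 'a poly" where
  "ore_sigma \<gamma> \<tau> p = pcompose p [:\<tau>, \<gamma>:]"

definition spow :: "('b \<Rightarrow> 'b) \<Rightarrow> int \<Rightarrow> 'b \<Rightarrow> 'b" where
  "spow s n = (if n \<ge> 0 then s ^^ nat n else inv s ^^ nat (- n))"

text \<open>Q_R(x) is realised as the fraction field of R[x]; sigma and delta extend to it.\<close>
definition sigK :: "('a::{factorial_ring_gcd, semiring_gcd_mult_normalize} poly \<Rightarrow> 'a poly) \<Rightarrow> 'a poly fract \<Rightarrow> 'a poly fract" where
  "sigK s f = (SOME y. \<exists>a b. b \<noteq> 0 \<and> f = Fract a b \<and> y = Fract (s a) (s b))"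

definition delK :: "('a::{factorial_ring_gcd, semiring_gcd_mult_normalize} poly \<Rightarrow> 'a poly) \<Rightarrow> ('a poly \<Rightarrow> 'a poly) \<Rightarrow> 'a poly fract \<Rightarrow> 'a poly fract" where
  "delK s d f = (SOME y. \<exists>a b. b \<noteq> 0 \<and> f = Fract a b \<and>
      y = Fract (d a * s b - s a * d b) (s b * b))"

definition emb :: "'a::{factorial_ring_gcd, semiring_gcd_mult_normalize} poly poly \<Rightarrow> 'a poly fract poly" where
  "emb Q = map_poly to_fract Q"

text \<open>cont(L) = Q_R(x)[\<partial>] L \<inter> R[x][\<partial>].\<close>
definition ore_cont :: "('a::{factorial_ring_gcd, semiring_gcd_mult_normalize} poly \<Rightarrow> 'a poly) \<Rightarrow> ('a poly \<Rightarrow> 'a poly) \<Rightarrow> 'a poly poly \<Rightarrow> 'a poly poly set" where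
  "ore_cont s d L = {Q. \<exists>P. ore_mult (sigK s) (delK s d) P (emb L) = emb Q}"

definition Mk :: "('a::{factorial_ring_gcd, semiring_gcd_mult_normalize} poly \<Rightarrow> 'a poly) \<Rightarrow> ('a poly \<Rightarrow> 'a poly) \<Rightarrow> nat \<Rightarrow> 'a poly poly \<Rightarrow> 'a poly poly set" where
  "Mk s d k L = {P \<in> ore_cont s d L. degree P \<le> k}"

definition removable_at :: "('a::{factorial_ring_gcd, semiring_gcd_mult_normalize} poly \<Rightarrow> 'a poly) \<Rightarrow> ('a poly \<Rightarrow> 'a poly) \<Rightarrow> 'a poly \<Rightarrow> 'a poly poly \<Rightarrow> nat \<Rightarrow> bool" where
  "removable_at s d p L k \<longleftrightarrow> p dvd lead_coeff L \<and>
     (\<exists>(P::'a poly fract poly) PL w v. P \<noteq> 0 \<and> degree P = k \<and>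
        ore_mult (sigK s) (delK s d) P (emb L) = emb PL \<and>
        coprime p w \<and> v \<noteq> 0 \<and>
        to_fract (spow s (- int k) (lead_coeff PL))
          = to_fract w / to_fract (v * p) * to_fract (lead_coeff L))"

definition non_removable :: "('a::{factorial_ring_gcd, semiring_gcd_mult_normalize} poly \<Rightarrow> 'a poly) \<Rightarrow> ('a poly \<Rightarrow> 'a poly) \<Rightarrow> 'a poly \<Rightarrow> 'a poly poly \<Rightarrow> bool" where
  "non_removable s d p L \<longleftrightarrow> \<not> (\<exists>k. removable_at s d p L k)"

definition desingularized :: "('a::{factorial_ring_gcd, semiring_gcd_mult_normalize} poly \<Rightarrow> 'a poly) \<Rightarrow> ('a poly \<Rightarrow> 'a poly) \<Rightarrow> 'a poly poly \<Rightarrow> 'a poly poly \<Rightarrow> bool" where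
  "desingularized s d L T \<longleftrightarrow> T \<in> ore_cont s d L \<and>
     (\<exists>(c::'a) (m::nat) (p::nat \<Rightarrow> 'a poly) (e::nat \<Rightarrow> nat) (kk::nat \<Rightarrow> nat) (a::'a) (b::'a).
        lead_coeff L = smult c (\<Prod>i<m. p i ^ e i) \<and>
        (\<forall>i<m. irreducible (p i) \<and> degree (p i) > 0 \<and> e i > 0) \<and>
        (\<forall>i<m. \<forall>j<m. i \<noteq> j \<longrightarrow> coprime (p i) (p j)) \<and>
        b \<noteq> 0 \<and>
        to_fract (spow s (int (degree L) - int (degree T)) (lead_coeff T))
          = to_fract [:a:] / to_fract ([:b:] * (\<Prod>i<m. p i ^ kk i)) * to_fract (lead_coeff L) \<and>
        (\<forall>i<m. \<forall>dd. dd > kk i \<longrightarrow> non_removable s d (p i ^ dd) L))"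

end

theory Submission
  imports Defs
begin


lemma coeff_ore_d:
  fixes s d :: "'k::comm_ring_1 \<Rightarrow> 'k"
  assumes "s 0 = 0" "d 0 = 0"
  shows "coeff (ore_d s d Q) n = (case n of 0 \<Rightarrow> 0 | Suc m \<Rightarrow> s (coeff Q m)) + d (coeff Q n)"
  using assms by (simp add: ore_d_def coeff_pCons coeff_map_poly split: nat.split)

lemma ore_d_add:
  fixes s d :: "'k::comm_ring_1 \<Rightarrow> 'k"
  assumes "s 0 = 0" "d 0 = 0" "\<And>x y. s (x + y) = s x + s y" "\<And>x y. d (x + y) = d x + d y"
  shows "ore_d s d (X + Y) = ore_d s d X + ore_d s d Y"
  by (rule poly_eqI) (simp add: coeff_ore_d assms split: nat.split)

lemma ore_d_0:
  fixes s d :: "'k::comm_ring_1 \<Rightarrow> 'k"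
  assumes "s 0 = 0" "d 0 = 0"
  shows "ore_d s d 0 = 0"
  by (rule poly_eqI) (simp add: coeff_ore_d assms split: nat.split)

lemma ore_d_sum:
  fixes s d :: "'k::comm_ring_1 \<Rightarrow> 'k"
  assumes "s 0 = 0" "d 0 = 0" "\<And>x y. s (x + y) = s x + s y" "\<And>x y. d (x + y) = d x + d y"
  shows "ore_d s d (sum f A) = (\<Sum>i\<in>A. ore_d s d (f i))"
proof (induction A rule: infinite_finite_induct)
  case (infinite A) then show ?case using ore_d_0[of s d, OF assms(1,2)] by simp
next
  case empty then show ?case using ore_d_0[of s d, OF assms(1,2)] by simp
next
  case (insert x F) then show ?case by (simp add: ore_d_add[of s d, OF assms])
qed

lemma ore_d_smult:
  fixes s d :: "'k::comm_ring_1 \<Rightarrow> 'k"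
  assumes "s 0 = 0" "d 0 = 0" "\<And>x y. s (x * y) = s x * s y" "\<And>x y. d (x * y) = s x * d y + d x * y"
  shows "ore_d s d (smult c X) = smult (s c) (ore_d s d X) + smult (d c) X"
  by (rule poly_eqI) (simp add: coeff_ore_d assms algebra_simps split: nat.split)

lemma ore_mult_ext:
  fixes s d :: "'k::comm_ring_1 \<Rightarrow> 'k"
  assumes "degree P \<le> N"
  shows "ore_mult s d P Q = (\<Sum>i\<le>N. smult (coeff P i) ((ore_d s d ^^ i) Q))"
proof -
  have "(\<Sum>i\<le>N. smult (coeff P i) ((ore_d s d ^^ i) Q)) = (\<Sum>i\<le>degree P. smult (coeff P i) ((ore_d s d ^^ i) Q))"
    by (rule sum.mono_neutral_right) (use assms in \<open>auto, metis coeff_eq_0 not_le smult_0_left\<close>)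
  then show ?thesis by (simp add: ore_mult_def)
qed

lemma degree_ore_d_le:
  fixes s d :: "'k::comm_ring_1 \<Rightarrow> 'k"
  assumes "s 0 = 0" "d 0 = 0"
  shows "degree (ore_d s d Q) \<le> Suc (degree Q)"
  by (rule degree_le) (auto simp: coeff_ore_d assms coeff_eq_0 split: nat.split)

lemma ore_d_comm:
  fixes s d :: "'k::comm_ring_1 \<Rightarrow> 'k"
  assumes s0: "s 0 = 0" and d0: "d 0 = 0" and sa: "\<And>x y. s (x + y) = s x + s y" and da: "\<And>x y. d (x + y) = d x + d y"
    and sm: "\<And>x y. s (x * y) = s x * s y" and dm: "\<And>x y. d (x * y) = s x * d y + d x * y"
  shows "ore_d s d (ore_mult s d P Q) = ore_mult s d (ore_d s d P) Q"
proof -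
  let ?D = "ore_d s d"
  define N where "N = degree P"
  have "ore_mult s d (?D P) Q = (\<Sum>i\<le>Suc N. smult (coeff (?D P) i) ((?D ^^ i) Q))"
    by (rule ore_mult_ext) (use degree_ore_d_le[of s d, OF s0 d0, of P] N_def in auto)
  also have "\<dots> = (\<Sum>i\<le>Suc N. smult (case i of 0 \<Rightarrow> 0 | Suc m \<Rightarrow> s (coeff P m)) ((?D ^^ i) Q))
        + (\<Sum>i\<le>Suc N. smult (d (coeff P i)) ((?D ^^ i) Q))"
    by (simp add: coeff_ore_d s0 d0 smult_add_left sum.distrib)
  also have "(\<Sum>i\<le>Suc N. smult (case i of 0 \<Rightarrow> 0 | Suc m \<Rightarrow> s (coeff P m)) ((?D ^^ i) Q))
      = (\<Sum>i\<le>N. smult (s (coeff P i)) ((?D ^^ Suc i) Q))"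
    by (subst sum.atMost_Suc_shift) simp
  also have "(\<Sum>i\<le>Suc N. smult (d (coeff P i)) ((?D ^^ i) Q)) = (\<Sum>i\<le>N. smult (d (coeff P i)) ((?D ^^ i) Q))"
    using N_def by (simp add: coeff_eq_0 d0)
  finally have "ore_mult s d (?D P) Q = (\<Sum>i\<le>N. smult (s (coeff P i)) ((?D ^^ Suc i) Q) + smult (d (coeff P i)) ((?D ^^ i) Q))"
    by (simp add: sum.distrib)
  also have "\<dots> = ?D (ore_mult s d P Q)"
    unfolding ore_mult_def N_def
    by (simp add: ore_d_sum[of s d, OF s0 d0 sa da] ore_d_smult[of s d, OF s0 d0 sm dm])
  finally show ?thesis by simp
qed

lemma ore_d_degree:
  fixes s d :: "'k::comm_ring_1 \<Rightarrow> 'k"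
  assumes s0: "s 0 = 0" and d0: "d 0 = 0" and snz: "\<And>x. x \<noteq> 0 \<Longrightarrow> s x \<noteq> 0" and "Q \<noteq> 0"
  shows "degree (ore_d s d Q) = Suc (degree Q) \<and> lead_coeff (ore_d s d Q) = s (lead_coeff Q)"
proof -
  have c: "coeff (ore_d s d Q) (Suc (degree Q)) = s (lead_coeff Q)"
    by (simp add: coeff_ore_d s0 d0 coeff_eq_0)
  have "s (lead_coeff Q) \<noteq> 0" using snz assms(4) by simp
  then have "degree (ore_d s d Q) = Suc (degree Q)"
    using c degree_ore_d_le[of s d, OF s0 d0, of Q] le_degree by (metis le_antisym)
  with c show ?thesis by simp
qed

lemma ore_d_pow_degree:
  fixes s d :: "'k::comm_ring_1 \<Rightarrow> 'k"
  assumes s0: "s 0 = 0" and d0: "d 0 = 0" and snz: "\<And>x. x \<noteq> 0 \<Longrightarrow> s x \<noteq> 0" and "Q \<noteq> 0"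
  shows "degree ((ore_d s d ^^ i) Q) = degree Q + i \<and> lead_coeff ((ore_d s d ^^ i) Q) = (s ^^ i) (lead_coeff Q)"
proof (induction i)
  case 0 then show ?case by simp
next
  case (Suc i)
  have "(ore_d s d ^^ i) Q \<noteq> 0"
  proof
    assume "(ore_d s d ^^ i) Q = 0"
    then have "(s ^^ i) (lead_coeff Q) = 0" using Suc by simp
    moreover have "(s ^^ j) (lead_coeff Q) \<noteq> 0" for j
      by (induction j) (use assms in auto)
    ultimately show False by blast
  qed
  from ore_d_degree[of s d, OF s0 d0 snz this] Suc.IH show ?case
    by (metis add_Suc_right funpow.simps(2) o_apply)
qed

lemma ore_mult_degree:
  fixes s d :: "'k::idom \<Rightarrow> 'k"
  assumes s0: "s 0 = 0" and d0: "d 0 = 0" and snz: "\<And>x. x \<noteq> 0 \<Longrightarrow> s x \<noteq> 0" and "Q \<noteq> 0" "P \<noteq> 0"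
    and "degree Q > 0"
  shows "degree (ore_mult s d P Q) = degree P + degree Q"
proof -
  let ?D = "ore_d s d"
  define N where "N = degree P"
  let ?f = "\<lambda>i. smult (coeff P i) ((?D ^^ i) Q)"
  have "ore_mult s d P Q = (\<Sum>i<N. ?f i) + ?f N"
    unfolding ore_mult_def N_def by (simp add: lessThan_Suc_atMost[symmetric])
  moreover have top: "degree (?f N) = N + degree Q"
    using ore_d_pow_degree[of s d, OF s0 d0 snz assms(4), of N] assms(5) N_def by simp
  moreover have "degree (\<Sum>i<N. ?f i) < N + degree Q"
  proof (cases N)
    case 0 then show ?thesis using assms(6) by simp
  next
    case (Suc M)
    have "degree (\<Sum>i<N. ?f i) \<le> M + degree Q"
      by (rule degree_sum_le) (use ore_d_pow_degree[of s d, OF s0 d0 snz assms(4)] Suc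
          in \<open>auto intro: order.trans[OF degree_smult_le]\<close>)
    then show ?thesis using Suc by simp
  qed
  ultimately show ?thesis using N_def by (simp add: degree_add_eq_right)
qed



definition phom :: "('a::{factorial_ring_gcd, semiring_gcd_mult_normalize} poly \<Rightarrow> 'a poly) \<Rightarrow> bool" where
  "phom f \<longleftrightarrow> (\<forall>x y. f (x + y) = f x + f y) \<and> (\<forall>x y. f (x * y) = f x * f y) \<and>
     (\<forall>c x. f (smult c x) = smult c (f x)) \<and> (\<forall>x. degree (f x) = degree x) \<and> f 0 = 0 \<and> f 1 = 1 \<and>
     (\<forall>x. content x dvd content (f x))"

lemma phom_comp: "phom f \<Longrightarrow> phom g \<Longrightarrow> phom (f \<circ> g)"
  unfolding phom_def by (auto intro: dvd_trans)

lemma phom_id: "phom id"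
  unfolding phom_def by auto

lemma phom_pow: "phom f \<Longrightarrow> phom (f ^^ n)"
  by (induction n) (auto simp: phom_id phom_comp)

lemma phom_pcompose:
  assumes "degree q = 1"
  shows "phom (\<lambda>p. pcompose p q)"
  unfolding phom_def
proof (intro conjI allI)
  fix x :: "'a poly"
  show "content x dvd content (pcompose x q)"
  proof -
    have "pcompose x q = smult (content x) (pcompose (primitive_part x) q)"
      by (metis content_times_primitive_part pcompose_smult)
    then show ?thesis by simp
  qed
qed (auto simp: pcompose_add pcompose_mult pcompose_smult degree_pcompose assms pcompose_1)

lemma phom_zero_iff: "phom f \<Longrightarrow> f x = 0 \<longleftrightarrow> x = 0"
proof
  assume "phom f" "f x = 0"
  then have "degree x = 0" unfolding phom_def by (metis degree_0)
  then obtain c where "x = [:c:]" by (metis degree_eq_zeroE)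
  then have "x = smult c 1" by simp
  then have "f x = smult c 1" using \<open>phom f\<close> unfolding phom_def by metis
  then show "x = 0" using \<open>f x = 0\<close> \<open>x = [:c:]\<close> by simp
qed (auto simp: phom_def)

lemma phom_dvd: "phom f \<Longrightarrow> x dvd y \<Longrightarrow> f x dvd f y"
  unfolding phom_def by (metis dvd_def)

lemma phom_const: "phom f \<Longrightarrow> f [:c:] = [:c:]"
proof -
  assume "phom f"
  have "f (smult c 1) = smult c (f 1)" using \<open>phom f\<close> unfolding phom_def by blast
  then show ?thesis using \<open>phom f\<close> unfolding phom_def by simp
qed

lemma phom_prod: "phom f \<Longrightarrow> f (x * y) = f x * f y"
  unfolding phom_def by blast
lemma phom_smult: "phom f \<Longrightarrow> f (smult c x) = smult c (f x)"
  unfolding phom_def by blast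
lemma phom_degree: "phom f \<Longrightarrow> degree (f x) = degree x"
  unfolding phom_def by blast
lemma phom_add: "phom f \<Longrightarrow> f (x + y) = f x + f y"
  unfolding phom_def by blast
lemma phom_content: "phom f \<Longrightarrow> content x dvd content (f x)"
  unfolding phom_def by blast

locale sig_setup =
  fixes \<gamma> \<tau> :: "'a::{factorial_ring_gcd, semiring_gcd_mult_normalize}"
  assumes gamma_unit: "is_unit \<gamma>"
begin

definition \<gamma>' where "\<gamma>' = (SOME g. \<gamma> * g = 1)"

lemma gamma'_inv: "\<gamma> * \<gamma>' = 1"
proof -
  obtain g where "1 = \<gamma> * g" using gamma_unit by (elim dvdE)
  then show ?thesis unfolding \<gamma>'_def by (metis (mono_tags) someI)
qed

abbreviation sig where "sig \<equiv> ore_sigma \<gamma> \<tau>"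
definition sig' where "sig' p = pcompose p [:- \<tau> * \<gamma>', \<gamma>':]"

lemma sig_eq: "sig = (\<lambda>p. pcompose p [:\<tau>, \<gamma>:])"
  by (simp add: ore_sigma_def fun_eq_iff)

lemma gamma_nz: "\<gamma> \<noteq> 0" using gamma_unit by auto
lemma gamma'_nz: "\<gamma>' \<noteq> 0" using gamma'_inv by auto

lemma phom_sig: "phom sig"
  unfolding sig_eq by (rule phom_pcompose) (simp add: gamma_nz)

lemma phom_sig': "phom sig'"
  unfolding sig'_def[abs_def] by (rule phom_pcompose) (simp add: gamma'_nz)

lemma sig_sig': "sig (sig' p) = p"
proof -
  have "pcompose [:- \<tau> * \<gamma>', \<gamma>':] [:\<tau>, \<gamma>:] = [:0, 1:]"
    by (simp add: pcompose_pCons algebra_simps gamma'_inv)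
  then show ?thesis unfolding sig_eq sig'_def by (simp add: pcompose_assoc[symmetric])
qed

lemma sig'_sig: "sig' (sig p) = p"
proof -
  have "pcompose [:\<tau>, \<gamma>:] [:- \<tau> * \<gamma>', \<gamma>':] = [:0, 1:]"
    by (simp add: pcompose_pCons algebra_simps gamma'_inv)
  then show ?thesis unfolding sig_eq sig'_def by (simp add: pcompose_assoc[symmetric])
qed

lemma inv_sig: "inv sig = sig'"
  by (rule inv_equality) (simp_all add: sig'_sig sig_sig')

lemma sigpow_sig'pow: "(sig ^^ n) ((sig' ^^ n) p) = p"
proof (induction n arbitrary: p)
  case (Suc n)
  have "(sig ^^ Suc n) ((sig' ^^ Suc n) p) = (sig ^^ n) (sig (sig' ((sig' ^^ n) p)))"
    by (simp add: funpow_swap1)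
  then show ?case using Suc by (simp add: sig_sig')
qed simp

lemma sig'pow_sigpow: "(sig' ^^ n) ((sig ^^ n) p) = p"
proof (induction n arbitrary: p)
  case (Suc n)
  have "(sig' ^^ Suc n) ((sig ^^ Suc n) p) = (sig' ^^ n) (sig' (sig ((sig ^^ n) p)))"
    by (simp add: funpow_swap1)
  then show ?case using Suc by (simp add: sig'_sig)
qed simp

lemma spow_neg: "spow sig (- int n) = sig' ^^ n"
  by (cases "n = 0") (simp_all add: spow_def inv_sig)

lemma spow_pos: "spow sig (int n) = sig ^^ n"
  by (simp add: spow_def)

end



locale ore_setup = sig_setup +
  fixes \<delta> :: "'a poly \<Rightarrow> 'a poly"
  assumes delta_add: "\<And>p q. \<delta> (p + q) = \<delta> p + \<delta> q"
    and delta_mult: "\<And>p q. \<delta> (p * q) = ore_sigma \<gamma> \<tau> p * \<delta> q + \<delta> p * q"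
begin

lemma delta_0: "\<delta> 0 = 0"
  using delta_add[of 0 0] by (metis add.right_neutral add_cancel_right_right)

lemma delta_1: "\<delta> 1 = 0"
proof -
  have "sig 1 = 1" using phom_sig by (simp add: phom_def)
  then have "\<delta> 1 = \<delta> 1 + \<delta> 1" using delta_mult[of 1 1] by simp
  then show ?thesis by (metis add_cancel_right_right)
qed

lemma delta_comm: "(sig x - x) * \<delta> y = (sig y - y) * \<delta> x"
  using delta_mult[of x y] delta_mult[of y x] by (simp add: algebra_simps)

lemma sig_mult: "sig (x * y) = sig x * sig y" using phom_sig by (simp add: phom_def)
lemma sig_add: "sig (x + y) = sig x + sig y" using phom_sig by (simp add: phom_def)
lemma sig_0: "sig 0 = 0" using phom_sig by (simp add: phom_def)
lemma sig_1: "sig 1 = 1" using phom_sig by (simp add: phom_def)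
lemma sig_eq_0: "sig x = 0 \<longleftrightarrow> x = 0" using phom_zero_iff[OF phom_sig] .

abbreviation sK where "sK \<equiv> sigK sig"
abbreviation dK where "dK \<equiv> delK sig \<delta>"

lemma sK_Fract: "b \<noteq> 0 \<Longrightarrow> sK (Fract a b) = Fract (sig a) (sig b)"
  unfolding sigK_def
proof (rule some_equality)
  assume "b \<noteq> 0"
  then show "\<exists>a' b'. b' \<noteq> 0 \<and> Fract a b = Fract a' b' \<and> Fract (sig a) (sig b) = Fract (sig a') (sig b')"
    by blast
next
  fix y assume b: "b \<noteq> 0" and "\<exists>a' b'. b' \<noteq> 0 \<and> Fract a b = Fract a' b' \<and> y = Fract (sig a') (sig b')"
  then obtain a' b' where b': "b' \<noteq> 0" and e: "Fract a b = Fract a' b'" and y: "y = Fract (sig a') (sig b')"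
    by blast
  from e b b' have "a * b' = a' * b" by (simp add: eq_fract)
  then have "sig a * sig b' = sig a' * sig b" by (metis sig_mult)
  then show "y = Fract (sig a) (sig b)" using y b b' by (simp add: eq_fract sig_eq_0)
qed

lemma dK_Fract: "b \<noteq> 0 \<Longrightarrow> dK (Fract a b) = Fract (\<delta> a * sig b - sig a * \<delta> b) (sig b * b)"
  unfolding delK_def
proof (rule some_equality)
  assume "b \<noteq> 0"
  then show "\<exists>a' b'. b' \<noteq> 0 \<and> Fract a b = Fract a' b' \<and>
     Fract (\<delta> a * sig b - sig a * \<delta> b) (sig b * b) = Fract (\<delta> a' * sig b' - sig a' * \<delta> b') (sig b' * b')"
    by blast
next
  fix y assume b: "b \<noteq> 0" and "\<exists>a' b'. b' \<noteq> 0 \<and> Fract a b = Fract a' b' \<and>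
     y = Fract (\<delta> a' * sig b' - sig a' * \<delta> b') (sig b' * b')"
  then obtain a' b' where b': "b' \<noteq> 0" and e: "Fract a b = Fract a' b'"
     and y: "y = Fract (\<delta> a' * sig b' - sig a' * \<delta> b') (sig b' * b')"
    by blast
  from e b b' have H1: "a * b' = a' * b" by (simp add: eq_fract)
  then have H2: "sig a * sig b' = sig a' * sig b" by (metis sig_mult)
  from H1 have H3: "sig a * \<delta> b' + \<delta> a * b' = sig a' * \<delta> b + \<delta> a' * b" by (metis delta_mult)
  have H4: "(sig b - b) * \<delta> b' = (sig b' - b') * \<delta> b" by (rule delta_comm)
  have "(\<delta> a' * sig b' - sig a' * \<delta> b') * (sig b * b) = (\<delta> a * sig b - sig a * \<delta> b) * (sig b' * b')"
    using H1 H2 H3 H4 by algebra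
  then show "y = Fract (\<delta> a * sig b - sig a * \<delta> b) (sig b * b)"
    using y b b' by (simp add: eq_fract sig_eq_0)
qed


lemma sK_to_fract: "sK (to_fract p) = to_fract (sig p)"
  by (simp add: to_fract_def sK_Fract sig_1)

lemma dK_to_fract: "dK (to_fract p) = to_fract (\<delta> p)"
  by (simp add: to_fract_def dK_Fract sig_1 delta_1)

lemma sK_0: "sK 0 = 0"
  using sK_to_fract[of 0] by (simp add: sig_0)

lemma dK_0: "dK 0 = 0"
  using dK_to_fract[of 0] by (simp add: delta_0)

lemma sK_nz: "x \<noteq> 0 \<Longrightarrow> sK x \<noteq> 0"
  by (cases x) (auto simp: sK_Fract eq_fract sig_eq_0 Zero_fract_def)

lemma sK_add: "sK (x + y) = sK x + sK y"
proof (cases x; cases y)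
  fix a b c d assume x: "x = Fract a b" "b \<noteq> 0" and y: "y = Fract c d" "d \<noteq> 0"
  then show ?thesis by (simp add: sK_Fract sig_mult sig_add sig_eq_0)
qed

lemma sK_mult: "sK (x * y) = sK x * sK y"
proof (cases x; cases y)
  fix a b c d assume x: "x = Fract a b" "b \<noteq> 0" and y: "y = Fract c d" "d \<noteq> 0"
  then show ?thesis by (simp add: sK_Fract sig_mult sig_add sig_eq_0)
qed

lemma dK_add: "dK (x + y) = dK x + dK y"
proof (cases x; cases y)
  fix a b c d assume x: "x = Fract a b" "b \<noteq> 0" and y: "y = Fract c d" "d \<noteq> 0"
  have H4: "(sig b - b) * \<delta> d = (sig d - d) * \<delta> b" by (rule delta_comm)
  have e: "(\<delta> (a * d + c * b) * sig (b * d) - sig (a * d + c * b) * \<delta> (b * d)) * (sig b * b * (sig d * d))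
     = ((\<delta> a * sig b - sig a * \<delta> b) * (sig d * d) + (\<delta> c * sig d - sig c * \<delta> d) * (sig b * b)) * (sig (b * d) * (b * d))"
    unfolding delta_add delta_mult sig_add sig_mult using H4 by algebra
  from x y show ?thesis
    by (simp add: dK_Fract sig_eq_0 eq_fract e)
qed

lemma dK_mult: "dK (x * y) = sK x * dK y + dK x * y"
proof (cases x; cases y)
  fix a b c d assume x: "x = Fract a b" "b \<noteq> 0" and y: "y = Fract c d" "d \<noteq> 0"
  have H4: "(sig b - b) * \<delta> d = (sig d - d) * \<delta> b" by (rule delta_comm)
  have H5: "(sig a - a) * \<delta> c = (sig c - c) * \<delta> a" by (rule delta_comm)
  have H6: "(sig a - a) * \<delta> d = (sig d - d) * \<delta> a" by (rule delta_comm)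
  have H7: "(sig b - b) * \<delta> c = (sig c - c) * \<delta> b" by (rule delta_comm)
  have e: "((sig a * \<delta> c + \<delta> a * c) * (sig b * sig d) -
         sig a * sig c * (sig b * \<delta> d + \<delta> b * d)) * (sig b * d) =
        sig a * (\<delta> c * sig d - sig c * \<delta> d) * (sig b * b * d) +
        (\<delta> a * sig b - sig a * \<delta> b) * c * (sig b * (sig d * d))"
    using H4 H7 by algebra
  from x y show ?thesis
    by (simp add: dK_Fract sK_Fract sig_eq_0 eq_fract sig_mult delta_mult e)
qed

end


lemma coeff_emb: "coeff (emb X) n = to_fract (coeff X n)"
  by (simp add: emb_def coeff_map_poly)

lemma emb_eq_iff: "emb X = emb Y \<longleftrightarrow> X = Y"
  by (auto simp: poly_eq_iff coeff_emb)

lemma emb_0: "emb 0 = 0" by (simp add: emb_def)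

lemma degree_emb: "degree (emb X) = degree X"
  by (simp add: emb_def degree_map_poly)

lemma lc_emb: "lead_coeff (emb X) = to_fract (lead_coeff X)"
  by (simp add: degree_emb coeff_emb)

lemma ore_mult_0: "ore_mult s d 0 Q = 0"
  by (simp add: ore_mult_def)

lemma ore_mult_monom: "ore_mult s d (monom 1 i) T = (ore_d s d ^^ i) T"
proof -
  have "ore_mult s d (monom 1 i) T = (\<Sum>j\<le>i. if i = j then (ore_d s d ^^ j) T else 0)"
  proof -
    have "\<And>j. smult (coeff (monom 1 i) j) ((ore_d s d ^^ j) T) = (if i = j then (ore_d s d ^^ j) T else 0)"
      by (simp add: coeff_monom)
    then show ?thesis unfolding ore_mult_def by (simp add: degree_monom_eq)
  qed
  also have "\<dots> = (ore_d s d ^^ i) T" by (simp add: sum.delta)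
  finally show ?thesis .
qed

context ore_setup
begin

lemma emb_ore_d: "emb (ore_d sig \<delta> X) = ore_d sK dK (emb X)"
  by (rule poly_eqI)
     (simp add: coeff_emb coeff_ore_d sig_0 delta_0 sK_0 dK_0 sK_to_fract dK_to_fract split: nat.split)

lemma emb_ore_d_pow: "emb ((ore_d sig \<delta> ^^ i) X) = (ore_d sK dK ^^ i) (emb X)"
  by (induction i) (simp_all add: emb_ore_d)

lemma cont_ore_d:
  assumes "T \<in> ore_cont sig \<delta> L"
  shows "ore_d sig \<delta> T \<in> ore_cont sig \<delta> L"
proof -
  from assms obtain P where P: "ore_mult sK dK P (emb L) = emb T"
    unfolding ore_cont_def by blast
  have "ore_mult sK dK (ore_d sK dK P) (emb L) = ore_d sK dK (ore_mult sK dK P (emb L))"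
    by (rule ore_d_comm[symmetric]) (simp_all add: sK_0 dK_0 sK_add dK_add sK_mult dK_mult)
  also have "\<dots> = emb (ore_d sig \<delta> T)" by (simp add: P emb_ore_d)
  finally show ?thesis unfolding ore_cont_def by blast
qed

lemma cont_ore_d_pow:
  assumes "T \<in> ore_cont sig \<delta> L"
  shows "(ore_d sig \<delta> ^^ i) T \<in> ore_cont sig \<delta> L"
  by (induction i) (simp_all add: assms cont_ore_d)

lemma ore_d_pow_R:
  assumes "T \<noteq> 0"
  shows "degree ((ore_d sig \<delta> ^^ i) T) = degree T + i \<and> lead_coeff ((ore_d sig \<delta> ^^ i) T) = (sig ^^ i) (lead_coeff T)"
  by (rule ore_d_pow_degree) (use assms in \<open>simp_all add: sig_0 delta_0 sig_eq_0\<close>)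

lemma cont_degree:
  assumes "F \<in> ore_cont sig \<delta> L" "F \<noteq> 0" "degree L > 0"
  shows "\<exists>P. P \<noteq> 0 \<and> degree P + degree L = degree F \<and> ore_mult sK dK P (emb L) = emb F"
proof -
  from assms obtain P where P: "ore_mult sK dK P (emb L) = emb F"
    unfolding ore_cont_def by blast
  have "P \<noteq> 0" using P assms(2) by (metis ore_mult_0 emb_0 emb_eq_iff)
  have "L \<noteq> 0" using assms(3) by auto
  have "degree (ore_mult sK dK P (emb L)) = degree P + degree (emb L)"
    by (rule ore_mult_degree) (use \<open>P \<noteq> 0\<close> \<open>L \<noteq> 0\<close> assms(3) in
         \<open>simp_all add: sK_0 dK_0 sK_nz degree_emb emb_eq_iff emb_0[symmetric]\<close>)
  then show ?thesis using P \<open>P \<noteq> 0\<close> by (auto simp: degree_emb)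
qed

end


context ore_setup
begin

lemma key:
  fixes m :: nat and p :: "nat \<Rightarrow> 'a poly" and e kk :: "nat \<Rightarrow> nat"
  assumes degL: "degree L > 0"
    and lcL: "lead_coeff L = smult c (\<Prod>i<m. p i ^ e i)"
    and irr: "\<forall>i<m. irreducible (p i)"
    and nr: "\<forall>i<m. \<forall>dd. dd > kk i \<longrightarrow> non_removable sig \<delta> (p i ^ dd) L"
    and F: "F \<in> ore_cont sig \<delta> L" "F \<noteq> 0"
  shows "degree F \<ge> degree L \<and>
         lead_coeff L dvd smult c ((\<Prod>i<m. p i ^ kk i) * (sig' ^^ (degree F - degree L)) (lead_coeff F))"
proof -
  obtain P where Pnz: "P \<noteq> 0" and degP: "degree P + degree L = degree F"
      and PL: "ore_mult sK dK P (emb L) = emb F"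
    using cont_degree[OF F degL] by blast
  define n where "n = degree P"
  have n_eq: "degree F - degree L = n" using degP n_def by simp
  define f' where "f' = (sig' ^^ n) (lead_coeff F)"
  define lc where "lc = lead_coeff L"
  have lcnz: "lc \<noteq> 0" using degL lc_def by auto
  define H where "H = (\<Prod>i<m. p i ^ kk i)"
  define q where "q = to_fract f' / to_fract lc"
  define u where "u = fst (quot_of_fract q)"
  define v where "v = snd (quot_of_fract q)"
  have cop: "coprime u v" unfolding u_def v_def by (rule coprime_quot_of_fract)
  have vnz: "v \<noteq> 0" unfolding v_def by simp
  have "q = quot_to_fract (quot_of_fract q)" by simp
  then have qF: "q = Fract u v" unfolding u_def v_def quot_to_fract_def by (simp add: case_prod_unfold)
  then have "to_fract f' = to_fract u / to_fract v * to_fract lc"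
    using lcnz unfolding q_def by (simp add: Fract_conv_to_fract field_simps)
  then have "to_fract (f' * v) = to_fract (u * lc)"
    using vnz by (simp add: field_simps)
  then have fv: "f' * v = u * lc" by (simp only: to_fract_eq_iff)
  have v_dvd: "v dvd lc"
  proof -
    have "v dvd u * lc" using fv by (metis dvd_triv_right)
    then show ?thesis using cop by (simp add: coprime_dvd_mult_right_iff coprime_commute)
  qed
  have notdvd: "\<not> p i ^ Suc (kk i) dvd v" if "i < m" for i
  proof
    assume "p i ^ Suc (kk i) dvd v"
    then obtain v' where v': "v = p i ^ Suc (kk i) * v'" by (elim dvdE)
    have "removable_at sig \<delta> (p i ^ Suc (kk i)) L n"
      unfolding removable_at_def
    proof (intro conjI exI)
      show "p i ^ Suc (kk i) dvd lead_coeff L" using v' v_dvd lc_def by (metis dvd_mult_left)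
      show "P \<noteq> 0" "degree P = n" "ore_mult sK dK P (emb L) = emb F" using Pnz n_def PL by auto
      show "coprime (p i ^ Suc (kk i)) u" using cop v' by (simp add: coprime_commute)
      show "v' \<noteq> 0" using v' vnz by auto
      show "to_fract (spow sig (- int n) (lead_coeff F)) =
            to_fract u / to_fract (v' * p i ^ Suc (kk i)) * to_fract (lead_coeff L)"
        using \<open>to_fract f' = to_fract u / to_fract v * to_fract lc\<close> v'
        by (simp add: spow_neg f'_def lc_def mult.commute)
    qed
    moreover have "non_removable sig \<delta> (p i ^ Suc (kk i)) L" using nr that by (simp del: power_Suc)
    ultimately show False unfolding non_removable_def by blast
  qed
  have cnz: "c \<noteq> 0" using lcnz lcL lc_def by auto
  have pnz: "p i \<noteq> 0" if "i < m" for i using irr that by auto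
  have H0: "H \<noteq> 0" unfolding H_def
    by (subst prod_zero_iff) (use pnz in auto)
  have Hnz: "[:c:] * H \<noteq> 0" using cnz H0 by simp
  have "v dvd [:c:] * H"
  proof (rule multiplicity_le_imp_dvd[OF vnz])
    fix \<pi> :: "'a poly" assume pr: "prime \<pi>"
    then have nu: "\<not> is_unit \<pi>" by auto
    show "multiplicity \<pi> v \<le> multiplicity \<pi> ([:c:] * H)"
    proof (cases "\<exists>i<m. \<pi> dvd p i")
      case True
      then obtain i where i: "i < m" "\<pi> dvd p i" by blast
      then obtain w where w: "p i = \<pi> * w" by (elim dvdE)
      have "is_unit w" using irreducibleD[OF _ w] irr i nu by auto
      then have pi_dvd: "p i dvd \<pi>" using w by (simp add: mult_unit_dvd_iff)
      have "multiplicity \<pi> v \<le> kk i"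
      proof (rule ccontr)
        assume "\<not> ?thesis"
        then have "\<pi> ^ Suc (kk i) dvd v" by (intro multiplicity_dvd') simp
        moreover have "p i ^ Suc (kk i) dvd \<pi> ^ Suc (kk i)" using pi_dvd by (rule dvd_power_same)
        ultimately show False using notdvd[OF i(1)] dvd_trans by blast
      qed
      moreover have "kk i \<le> multiplicity \<pi> ([:c:] * H)"
      proof (rule multiplicity_geI[OF Hnz nu])
        have "\<pi> ^ kk i dvd p i ^ kk i" using i by (simp add: dvd_power_same)
        also have "p i ^ kk i dvd H" unfolding H_def using i by (intro dvd_prodI) auto
        also have "H dvd [:c:] * H" by (rule dvd_triv_right)
        finally show "\<pi> ^ kk i dvd [:c:] * H" .
      qed
      ultimately show ?thesis by simp
    next
      case False
      have nd: "\<not> \<pi> dvd (\<Prod>i<m. p i ^ e i)"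
        using False pr by (auto simp: prime_dvd_prod_iff dest: prime_dvd_power)
      have pnz2: "(\<Prod>i<m. p i ^ e i) \<noteq> 0"
        by (subst prod_zero_iff) (use pnz in auto)
      have "multiplicity \<pi> v \<le> multiplicity \<pi> lc"
        using v_dvd lcnz by (rule dvd_imp_multiplicity_le)
      also have "lc = [:c:] * (\<Prod>i<m. p i ^ e i)" using lcL lc_def by simp
      also have "multiplicity \<pi> \<dots> = multiplicity \<pi> [:c:]"
        using cnz pnz2 pr not_dvd_imp_multiplicity_0[OF nd]
        by (subst prime_elem_multiplicity_mult_distrib) auto
      also have "\<dots> \<le> multiplicity \<pi> ([:c:] * H)"
        using Hnz by (intro dvd_imp_multiplicity_le dvd_triv_left)
      finally show ?thesis .
    qed
  qed
  then obtain w where w: "[:c:] * H = v * w" by (elim dvdE)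
  have "smult c (H * f') = ([:c:] * H) * f'" by simp
  also have "\<dots> = (f' * v) * w" using w by (simp add: ac_simps)
  also have "\<dots> = lc * (u * w)" using fv by (simp add: ac_simps)
  finally have "smult c (H * f') = lc * (u * w)" .
  then show ?thesis using degP n_eq f'_def lc_def H_def by (auto intro: dvdI)
qed

end


lemma cmul: "[:x:] * p = smult x p" by simp

lemma fld_aux: "(x::'b::field) = A / B * C \<Longrightarrow> B \<noteq> 0 \<Longrightarrow> x * B = A * C"
  by (simp add: field_simps)

lemma prim_dvd_smult:
  fixes g f :: "'a::{factorial_ring_gcd, semiring_gcd_mult_normalize} poly"
  assumes "g dvd smult d f" "d \<noteq> 0" "content g = 1"
  shows "g dvd f"
proof -
  from assms(1) obtain h where h: "smult d f = g * h" by (elim dvdE)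
  then have "smult (to_fract d) (fract_poly f) = fract_poly g * fract_poly h"
    by (metis fract_poly_smult fract_poly_mult)
  then have "fract_poly g dvd smult (to_fract d) (fract_poly f)" by (metis dvd_triv_left)
  then have "fract_poly g dvd fract_poly f" using assms(2) by (metis dvd_smult_cancel to_fract_eq_0_iff)
  then show ?thesis using assms(3) by (rule fract_poly_dvdD)
qed

context ore_setup
begin

lemma phom_sig'pow: "phom (sig' ^^ n)" by (rule phom_pow[OF phom_sig'])
lemma phom_sigpow: "phom (sig ^^ n)" by (rule phom_pow[OF phom_sig])

end

theorem mainTheorem12:
  fixes \<gamma> \<tau> :: "'a::{factorial_ring_gcd, semiring_gcd_mult_normalize}"
    and \<delta> :: "'a poly \<Rightarrow> 'a poly"
    and L T :: "'a poly poly"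
    and r k :: nat
  assumes pid: "pid TYPE('a)"
    and gamma_unit: "is_unit \<gamma>"
    and delta_add: "\<And>p q. \<delta> (p + q) = \<delta> p + \<delta> q"
    and delta_smult: "\<And>c p. \<delta> (smult c p) = smult c (\<delta> p)"
    and delta_mult: "\<And>p q. \<delta> (p * q) = ore_sigma \<gamma> \<tau> p * \<delta> q + \<delta> p * q"
    and delta_x: "degree (\<delta> [:0, 1:]) \<le> 1"
    and L_order: "degree L = r" and r_pos: "r > 0"
    and k_ge: "k \<ge> r"
    and T_des: "desingularized (ore_sigma \<gamma> \<tau>) \<delta> L T"
    and T_order: "degree T = k"
  shows "degree (lead_coeff T) =
           (LEAST n. \<exists>Q. Q \<in> Mk (ore_sigma \<gamma> \<tau>) \<delta> k L \<and> Q \<noteq> 0 \<and> n = degree (lead_coeff Q)) \<and>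
         (\<forall>i. desingularized (ore_sigma \<gamma> \<tau>) \<delta> L (ore_mult (ore_sigma \<gamma> \<tau>) \<delta> (monom 1 i) T)) \<and>
         (\<forall>(a::'a) (g::'a poly). lead_coeff T = smult a g \<and> content g = 1 \<longrightarrow>
           (\<forall>F j. F \<in> ore_cont (ore_sigma \<gamma> \<tau>) \<delta> L \<and> F \<noteq> 0 \<and> degree F = j \<and> j \<ge> k \<longrightarrow>
              spow (ore_sigma \<gamma> \<tau>) (int j - int k) g dvd lead_coeff F))"
proof -
  interpret ore_setup \<gamma> \<tau> \<delta>
    by unfold_locales (use gamma_unit delta_add delta_mult in auto)
  from T_des obtain c m and p :: "nat \<Rightarrow> 'a poly" and e kk :: "nat \<Rightarrow> nat" and a b where
    Tc: "T \<in> ore_cont sig \<delta> L" and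
    lcL: "lead_coeff L = smult c (\<Prod>i<m. p i ^ e i)" and
    irrs: "\<forall>i<m. irreducible (p i) \<and> degree (p i) > 0 \<and> e i > 0" and
    copr: "\<forall>i<m. \<forall>j<m. i \<noteq> j \<longrightarrow> coprime (p i) (p j)" and
    bnz: "b \<noteq> 0" and
    eqT: "to_fract (spow sig (int (degree L) - int (degree T)) (lead_coeff T))
          = to_fract [:a:] / to_fract ([:b:] * (\<Prod>i<m. p i ^ kk i)) * to_fract (lead_coeff L)" and
    nr: "\<forall>i<m. \<forall>dd. dd > kk i \<longrightarrow> non_removable sig \<delta> (p i ^ dd) L"
    unfolding desingularized_def by blast
  have irr: "\<forall>i<m. irreducible (p i)" using irrs by blast
  define H where "H = (\<Prod>i<m. p i ^ kk i)"
  define n0 where "n0 = k - r"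
  define t' where "t' = (sig' ^^ n0) (lead_coeff T)"
  have degL: "degree L > 0" using L_order r_pos by simp
  have Lnz: "lead_coeff L \<noteq> 0" using degL by auto
  have Tnz: "T \<noteq> 0" using T_order k_ge r_pos by auto
  have pnz: "p i \<noteq> 0" if "i < m" for i using irr that by auto
  have H0: "H \<noteq> 0" unfolding H_def by (subst prod_zero_iff) (use pnz in auto)
  have spT: "spow sig (int (degree L) - int (degree T)) = sig' ^^ n0"
  proof -
    have "int (degree L) - int (degree T) = - int n0" using L_order T_order k_ge n0_def by simp
    then show ?thesis by (simp add: spow_neg)
  qed
  have t'nz: "t' \<noteq> 0" using Tnz phom_zero_iff[OF phom_sig'pow] t'_def by simp
  have "to_fract t' = to_fract [:a:] / to_fract ([:b:] * H) * to_fract (lead_coeff L)"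
    using eqT spT t'_def H_def by simp
  moreover have "to_fract ([:b:] * H) \<noteq> 0" using bnz H0 by (simp only: to_fract_eq_0_iff) simp
  ultimately have "to_fract t' * to_fract ([:b:] * H) = to_fract [:a:] * to_fract (lead_coeff L)"
    by (rule fld_aux)
  then have "to_fract (t' * ([:b:] * H)) = to_fract ([:a:] * lead_coeff L)"
    by (simp only: to_fract_mult)
  then have "t' * ([:b:] * H) = [:a:] * lead_coeff L" by (simp only: to_fract_eq_iff)
  then have tT: "[:b:] * H * t' = [:a:] * lead_coeff L" by (simp only: ac_simps)
  have anz: "a \<noteq> 0" using tT bnz H0 t'nz by auto
  have cnz: "c \<noteq> 0" using Lnz lcL by auto
  have gen: "degree Q \<ge> r \<and> [:b:] * t' dvd [:a * c:] * (sig' ^^ (degree Q - r)) (lead_coeff Q)"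
    if Q: "Q \<in> ore_cont sig \<delta> L" "Q \<noteq> 0" for Q
  proof -
    from key[OF degL lcL irr nr Q] L_order
    have kq: "degree Q \<ge> r" "lead_coeff L dvd smult c (H * (sig' ^^ (degree Q - r)) (lead_coeff Q))"
      unfolding H_def by auto
    define f' where "f' = (sig' ^^ (degree Q - r)) (lead_coeff Q)"
    have "[:a:] * lead_coeff L dvd [:a:] * smult c (H * f')"
      unfolding f'_def by (rule mult_dvd_mono[OF dvd_refl kq(2)])
    then have "H * ([:b:] * t') dvd H * ([:a * c:] * f')"
      using tT by (simp add: ac_simps)
    then have "[:b:] * t' dvd [:a * c:] * f'" using H0 by (metis dvd_times_left_cancel_iff)
    then show ?thesis using kq(1) f'_def by simp
  qed
  have degt': "degree t' = degree (lead_coeff T)" unfolding t'_def by (rule phom_degree[OF phom_sig'pow])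
  have part1: "degree (lead_coeff T) =
           (LEAST n. \<exists>Q. Q \<in> Mk sig \<delta> k L \<and> Q \<noteq> 0 \<and> n = degree (lead_coeff Q))"
  proof (rule Least_equality[symmetric])
    show "\<exists>Q. Q \<in> Mk sig \<delta> k L \<and> Q \<noteq> 0 \<and> degree (lead_coeff T) = degree (lead_coeff Q)"
      using Tc Tnz T_order by (auto simp: Mk_def)
  next
    fix y assume "\<exists>Q. Q \<in> Mk sig \<delta> k L \<and> Q \<noteq> 0 \<and> y = degree (lead_coeff Q)"
    then obtain Q where Q: "Q \<in> ore_cont sig \<delta> L" "Q \<noteq> 0" and y: "y = degree (lead_coeff Q)"
      by (auto simp: Mk_def)
    define f' where "f' = (sig' ^^ (degree Q - r)) (lead_coeff Q)"
    have fnz: "f' \<noteq> 0" using Q(2) phom_zero_iff[OF phom_sig'pow] f'_def by simp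
    have "[:b:] * t' dvd [:a * c:] * f'" using gen[OF Q] f'_def by simp
    moreover have "[:a * c:] * f' \<noteq> 0" using anz cnz fnz by simp
    ultimately have "degree ([:b:] * t') \<le> degree ([:a * c:] * f')" by (rule dvd_imp_degree_le)
    moreover have "degree f' = degree (lead_coeff Q)" unfolding f'_def by (rule phom_degree[OF phom_sig'pow])
    ultimately show "degree (lead_coeff T) \<le> y" using y degt' bnz anz cnz by simp
  qed
  have part2: "\<forall>i. desingularized sig \<delta> L (ore_mult sig \<delta> (monom 1 i) T)"
  proof
    fix i
    define Ti where "Ti = (ore_d sig \<delta> ^^ i) T"
    have Ti: "degree Ti = k + i" "lead_coeff Ti = (sig ^^ i) (lead_coeff T)"
      using ore_d_pow_R[OF Tnz, of i] T_order Ti_def by auto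
    have spTi: "spow sig (int (degree L) - int (degree Ti)) = sig' ^^ (n0 + i)"
    proof -
      have "int (degree L) - int (degree Ti) = - int (n0 + i)" using L_order Ti k_ge n0_def by simp
      then show ?thesis by (simp only: spow_neg)
    qed
    have "spow sig (int (degree L) - int (degree Ti)) (lead_coeff Ti) = t'"
      unfolding spTi Ti(2) t'_def by (simp add: funpow_add sig'pow_sigpow)
    then have eqTi: "to_fract (spow sig (int (degree L) - int (degree Ti)) (lead_coeff Ti))
          = to_fract [:a:] / to_fract ([:b:] * (\<Prod>i<m. p i ^ kk i)) * to_fract (lead_coeff L)"
      using eqT spT t'_def by simp
    have TiC: "Ti \<in> ore_cont sig \<delta> L" unfolding Ti_def by (rule cont_ore_d_pow[OF Tc])
    have "desingularized sig \<delta> L Ti"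
      unfolding desingularized_def
      apply (rule conjI[OF TiC])
      apply (rule exI[of _ c], rule exI[of _ m], rule exI[of _ p], rule exI[of _ e], rule exI[of _ kk],
             rule exI[of _ a], rule exI[of _ b])
      apply (intro conjI)
            apply (rule lcL)
           apply (rule irrs)
          apply (rule copr)
         apply (rule bnz)
        apply (rule eqTi)
       apply (rule nr)
      done
    then show "desingularized sig \<delta> L (ore_mult sig \<delta> (monom 1 i) T)"
      by (simp add: ore_mult_monom Ti_def)
  qed
  have part3: "\<forall>(a0::'a) (g::'a poly). lead_coeff T = smult a0 g \<and> content g = 1 \<longrightarrow>
           (\<forall>F j. F \<in> ore_cont sig \<delta> L \<and> F \<noteq> 0 \<and> degree F = j \<and> j \<ge> k \<longrightarrow>
              spow sig (int j - int k) g dvd lead_coeff F)"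
  proof (intro allI impI)
    fix a0 :: 'a and g :: "'a poly" and F :: "'a poly poly" and j :: nat
    assume ag: "lead_coeff T = smult a0 g \<and> content g = 1"
      and Fj: "F \<in> ore_cont sig \<delta> L \<and> F \<noteq> 0 \<and> degree F = j \<and> j \<ge> k"
    define g' where "g' = (sig' ^^ n0) g"
    have tg: "t' = smult a0 g'" unfolding t'_def g'_def using ag by (simp add: phom_smult[OF phom_sig'pow])
    have a0nz: "a0 \<noteq> 0" using tg t'nz by auto
    have "content g' dvd content ((sig ^^ n0) g')" by (rule phom_content[OF phom_sigpow])
    also have "(sig ^^ n0) g' = g" unfolding g'_def by (rule sigpow_sig'pow)
    finally have "is_unit (content g')" using ag by simp
    then have "normalize (content g') = 1" by (rule is_unit_normalize)
    then have cg': "content g' = 1" by (simp only: normalize_content)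
    define f' where "f' = (sig' ^^ (j - r)) (lead_coeff F)"
    have FC: "F \<in> ore_cont sig \<delta> L" and Fnz: "F \<noteq> 0" and dF: "degree F = j" using Fj by blast+
    have d1: "[:b:] * t' dvd [:a * c:] * f'" using conjunct2[OF gen[OF FC Fnz]] unfolding dF f'_def .
    have e2: "[:b:] * t' = g' * [:b * a0:]" using tg by (simp add: ac_simps)
    have d2: "g' dvd [:b:] * t'" unfolding e2 by (rule dvd_triv_left)
    have "g' dvd [:a * c:] * f'" using dvd_trans[OF d2 d1] .
    then have gd: "g' dvd smult (a * c) f'" unfolding cmul .
    have acnz: "a * c \<noteq> 0" using anz cnz by simp
    have gf: "g' dvd f'" by (rule prim_dvd_smult[OF gd acnz cg'])
    have X: "(sig ^^ (j - r)) g' dvd (sig ^^ (j - r)) f'" using gf by (rule phom_dvd[OF phom_sigpow])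
    have Y: "(sig ^^ (j - r)) f' = lead_coeff F" unfolding f'_def by (rule sigpow_sig'pow)
    have jr: "j - r = (j - k) + n0" using Fj k_ge n0_def by simp
    have ijk: "int j - int k = int (j - k)" using Fj by simp
    have Z: "spow sig (int j - int k) g = (sig ^^ (j - k)) g" unfolding ijk by (rule fun_cong[OF spow_pos])
    have g_eq: "g = (sig ^^ n0) g'" unfolding g'_def by (rule sigpow_sig'pow[symmetric])
    have "(sig ^^ (j - r)) g' = (sig ^^ (j - k)) ((sig ^^ n0) g')" unfolding jr funpow_add by simp
    also have "\<dots> = (sig ^^ (j - k)) g" by (simp only: g_eq[symmetric])
    also have "\<dots> = spow sig (int j - int k) g" by (simp only: Z)
    finally have W: "(sig ^^ (j - r)) g' = spow sig (int j - int k) g" .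
    show "spow sig (int j - int k) g dvd lead_coeff F" using X unfolding Y W .
  qed
  show ?thesis using part1 part2 part3 by blast
qed


end
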